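(* Let $\varepsilon>0$ and let $P$ be a probability on $\mathbb{R}^d$ with a Lebesgue density $r_P$ such that $\log r_P\in L_1(P)$. Then $P*N_d(0,\tfrac{\varepsilon}{2}I_d)$ is the unique minimizer of $Q\mapsto\mathcal{W}^2_{2,\varepsilon}(P,Q)$ over the set of all probabilities $Q$ on $\mathbb{R}^d$.
   Context: For probabilities $P,Q$ on $\mathbb{R}^d$, $\Pi(P,Q)$ is the set of probabilities on $\mathbb{R}^d\times\mathbb{R}^d$ with marginals $P$ and $Q$. For a probability $\pi$ on $\mathbb{R}^d\times\mathbb{R}^d$, $H(\pi)=\int r(x,y)\log r(x,y)\,dx\,dy$ if $\pi$ has a Lebesgue density $r$, and $H(\pi)=+\infty$ otherwise. $\mathcal{W}^2_{2,\varepsilon}(P,Q)=\min_{\pi\in\Pi(P,Q)}\big[\int\|x-y\|^2\,d\pi(x,y)+\varepsilon H(\pi)\big]$. $*$ denotes convolution of measures and $N_d(0,\frac{\varepsilon}{2}I_d)$ the centered Gaussian on $\mathbb{R}^d$ with covariance $\frac{\varepsilon}{2}I_d$. *)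

theory Defs
  imports "HOL-Probability.Probability"
begin

definition is_prob :: "'a::euclidean_space measure \<Rightarrow> bool" where
  "is_prob Q \<longleftrightarrow> prob_space Q \<and> sets Q = sets borel"

definition couplings :: "'a::euclidean_space measure \<Rightarrow> 'a measure \<Rightarrow> ('a \<times> 'a) measure set" where
  "couplings P Q = {\<pi>. prob_space \<pi> \<and> sets \<pi> = sets borel \<and>
                       distr \<pi> borel fst = P \<and> distr \<pi> borel snd = Q}"

definition has_leb_density :: "'a::euclidean_space measure \<Rightarrow> ('a \<Rightarrow> real) \<Rightarrow> bool" where
  "has_leb_density \<mu> r \<longleftrightarrow> r \<in> borel_measurable lborel \<and> (\<forall>x. 0 \<le> r x) \<and>
                           \<mu> = density lborel (\<lambda>x. ennreal (r x))"

text \<open>The integral is taken in the extended reals as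
  (positive part) - (negative part); with Isabelle's ereal convention
  infinity - infinity = infinity.\<close>
definition entropy_leb :: "'a::euclidean_space measure \<Rightarrow> ereal" where
  "entropy_leb \<mu> =
     (if \<exists>r. has_leb_density \<mu> r then
        (let r = (SOME r. has_leb_density \<mu> r) in
           (enn2ereal (\<integral>\<^sup>+x. ennreal (max 0 (r x * ln (r x))) \<partial>lborel)
            - enn2ereal (\<integral>\<^sup>+x. ennreal (max 0 (- (r x * ln (r x)))) \<partial>lborel)))
      else \<infinity>)"

definition quad_cost :: "('a::euclidean_space \<times> 'a) measure \<Rightarrow> ereal" where
  "quad_cost \<pi> = enn2ereal (\<integral>\<^sup>+z. ennreal ((norm (fst z - snd z))\<^sup>2) \<partial>\<pi>)"

definition entropic_W2 :: "real \<Rightarrow> 'a::euclidean_space measure \<Rightarrow> 'a measure \<Rightarrow> ereal" where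
  "entropic_W2 \<epsilon> P Q = (INF \<pi>\<in>couplings P Q. quad_cost \<pi> + ereal \<epsilon> * entropy_leb \<pi>)"

definition gaussian_iso :: "real \<Rightarrow> (real ^ 'd) measure" where
  "gaussian_iso \<epsilon> = density lborel
     (\<lambda>x. ennreal (\<Prod>i\<in>UNIV. normal_density 0 (sqrt (\<epsilon> / 2)) (x $ i)))"

end

theory Submission imports Defs begin


lemma Basis_vec_real: "(Basis :: (real^'d) set) = range (\<lambda>i. axis i 1)"
  unfolding Basis_vec_def by auto

lemma inj_axis1: "inj (\<lambda>i::'d::finite. axis i (1::real))"
  by (auto simp: inj_def axis_eq_axis)

lemma prod_vec_Basis:
  fixes z :: "real^'d::finite"
  shows "(\<Prod>i\<in>UNIV. h i (z$i)) = (\<Prod>b\<in>(Basis::(real^'d::finite) set). (h (SOME i. b = axis i 1)) (z \<bullet> b))"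
proof -
  have "(\<Prod>b\<in>(Basis::(real^'d::finite) set). (h (SOME i. b = axis i 1)) (z \<bullet> b))
      = (\<Prod>i\<in>UNIV. (h (SOME j. axis i (1::real) = axis j 1)) (z \<bullet> axis i 1))"
    unfolding Basis_vec_real by (subst prod.reindex[OF inj_axis1]) (simp add: o_def)
  also have "\<dots> = (\<Prod>i\<in>UNIV. h i (z$i))"
  proof (rule prod.cong[OF refl])
    fix i :: 'd
    have "(SOME j. axis i (1::real) = axis j 1) = i"
      by (rule some_equality) (auto simp: axis_eq_axis)
    then show "(h (SOME j. axis i (1::real) = axis j 1)) (z \<bullet> axis i 1) = h i (z$i)"
      by (simp add: cart_eq_inner_axis)
  qed
  finally show ?thesis by simp
qed

lemma nn_integral_vec_prod:
  fixes h :: "'d::finite \<Rightarrow> real \<Rightarrow> real"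
  assumes [measurable]: "\<And>i. h i \<in> borel_measurable borel" and nn: "\<And>i t. 0 \<le> h i t"
  shows "(\<integral>\<^sup>+z. ennreal (\<Prod>i\<in>UNIV. h i (z$i)) \<partial>(lborel::(real^'d) measure))
       = (\<Prod>i\<in>UNIV. \<integral>\<^sup>+t. ennreal (h i t) \<partial>lborel)"
proof -
  define f where "f b t = ennreal (h (SOME i. b = axis i 1) t)" for b :: "real^'d" and t
  have "(\<integral>\<^sup>+z. ennreal (\<Prod>i\<in>UNIV. h i (z$i)) \<partial>(lborel::(real^'d) measure))
      = (\<integral>\<^sup>+z. (\<Prod>b\<in>Basis. f b (z \<bullet> b)) \<partial>(lborel::(real^'d) measure))"
    unfolding prod_vec_Basis f_def by (simp add: prod_ennreal nn prod_nonneg)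
  also have "\<dots> = (\<Prod>b\<in>(Basis::(real^'d) set). integral\<^sup>N lborel (f b))"
    by (rule nn_integral_lborel_prod) (auto simp: f_def)
  also have "\<dots> = (\<Prod>i\<in>UNIV. \<integral>\<^sup>+t. ennreal (h i t) \<partial>lborel)"
  proof -
    have "(\<Prod>b\<in>(Basis::(real^'d) set). integral\<^sup>N lborel (f b))
        = (\<Prod>i\<in>UNIV. integral\<^sup>N lborel (f (axis i 1)))"
      unfolding Basis_vec_real by (subst prod.reindex[OF inj_axis1]) (simp add: o_def)
    also have "\<dots> = (\<Prod>i\<in>UNIV. \<integral>\<^sup>+t. ennreal (h i t) \<partial>lborel)"
    proof (rule prod.cong[OF refl])
      fix i :: 'd
      have "(SOME j. axis i (1::real) = axis j 1) = i"
        by (rule some_equality) (auto simp: axis_eq_axis)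
      then have "f (axis i 1) = (\<lambda>t. ennreal (h i t))"
        by (auto simp: f_def fun_eq_iff)
      then show "integral\<^sup>N lborel (f (axis i 1)) = \<integral>\<^sup>+t. ennreal (h i t) \<partial>lborel"
        by simp
    qed
    finally show ?thesis .
  qed
  finally show ?thesis .
qed

definition gk :: "real \<Rightarrow> real^'d::finite \<Rightarrow> real" where
  "gk \<epsilon> z = (\<Prod>i\<in>UNIV. normal_density 0 (sqrt (\<epsilon> / 2)) (z $ i))"

lemma gk_pos: "\<epsilon> > 0 \<Longrightarrow> gk \<epsilon> z > 0"
  unfolding gk_def by (intro prod_pos) (auto intro!: normal_density_pos)

lemma gk_measurable[measurable]: "gk \<epsilon> \<in> borel_measurable borel"
  unfolding gk_def by measurable

lemma gaussian_iso_gk: "gaussian_iso \<epsilon> = density lborel (\<lambda>x. ennreal (gk \<epsilon> x))"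
  unfolding gaussian_iso_def gk_def ..

lemma nn_integral_gk: assumes "\<epsilon> > 0" shows "(\<integral>\<^sup>+z. ennreal (gk \<epsilon> z) \<partial>(lborel::(real^'d) measure)) = 1"
proof -
  have "(\<integral>\<^sup>+z. ennreal (gk \<epsilon> z) \<partial>(lborel::(real^'d) measure))
     = (\<Prod>i\<in>(UNIV::'d set). \<integral>\<^sup>+t. ennreal (normal_density 0 (sqrt (\<epsilon> / 2)) t) \<partial>lborel)"
    unfolding gk_def by (rule nn_integral_vec_prod) auto
  also have "\<dots> = 1"
  proof -
    have "(\<integral>\<^sup>+t. ennreal (normal_density 0 (sqrt (\<epsilon> / 2)) t) \<partial>lborel) = 1"
      using assms by (subst nn_integral_eq_integral) (auto intro!: integrable_normal_density)
    then show ?thesis by simp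
  qed
  finally show ?thesis .
qed

lemma norm_vec_sq: "(norm (z::real^'d))\<^sup>2 = (\<Sum>i\<in>UNIV. (z$i)\<^sup>2)"
  unfolding norm_vec_def L2_set_def by (simp add: sum_nonneg)

lemma ln_gk:
  assumes "\<epsilon> > 0"
  shows "ln (gk \<epsilon> (z::real^'d)) = - (norm z)\<^sup>2 / \<epsilon> - real CARD('d) * ln (sqrt (pi * \<epsilon>))"
proof -
  have nd: "ln (normal_density 0 (sqrt (\<epsilon> / 2)) t) = - t\<^sup>2 / \<epsilon> - ln (sqrt (pi * \<epsilon>))" for t
  proof -
    have "normal_density 0 (sqrt (\<epsilon> / 2)) t = exp (- t\<^sup>2 / \<epsilon>) / sqrt (pi * \<epsilon>)"
      using assms by (simp add: normal_density_def)
    then show ?thesis using assms by (simp add: ln_div)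
  qed
  have "ln (gk \<epsilon> z) = (\<Sum>i\<in>UNIV. ln (normal_density 0 (sqrt (\<epsilon> / 2)) (z$i)))"
  proof -
    have "0 < sqrt (\<epsilon> / 2)" using assms by simp
    then have "\<And>i. normal_density 0 (sqrt (\<epsilon> / 2)) (z$i) > 0" by (rule normal_density_pos)
    then show ?thesis unfolding gk_def by (subst ln_prod) (auto, metis order_less_irrefl)
  qed
  also have "\<dots> = (\<Sum>i\<in>UNIV. - (z$i)\<^sup>2 / \<epsilon> - ln (sqrt (pi * \<epsilon>)))"
    by (simp add: nd)
  also have "\<dots> = - (norm z)\<^sup>2 / \<epsilon> - real CARD('d) * ln (sqrt (pi * \<epsilon>))"
    by (simp add: norm_vec_sq sum_subtractf sum_divide_distrib[symmetric] sum_negf)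
  finally show ?thesis .
qed

lemma nn_integral_gk_moment:
  assumes "\<epsilon> > 0" shows "(\<integral>\<^sup>+z. ennreal (gk \<epsilon> z * (norm z)\<^sup>2) \<partial>(lborel::(real^'d) measure)) < \<infinity>"
proof -
  define h where "h j i t = normal_density 0 (sqrt (\<epsilon> / 2)) t * (if i = j then t\<^sup>2 else 1)" for j i :: 'd and t
  have eq: "gk \<epsilon> z * (norm z)\<^sup>2 = (\<Sum>j\<in>UNIV. \<Prod>i\<in>UNIV. h j i (z$i))" for z :: "real^'d"
  proof -
    have "(\<Prod>i\<in>UNIV. h j i (z$i)) = gk \<epsilon> z * (z$j)\<^sup>2" for j
      unfolding h_def gk_def prod.distrib by (simp add: prod.If_cases)
    then show ?thesis by (simp add: norm_vec_sq sum_distrib_left)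
  qed
  have fin: "(\<integral>\<^sup>+t. ennreal (h j i t) \<partial>lborel) < \<infinity>" for i j
  proof (cases "i = j")
    case True
    have s: "0 < sqrt (\<epsilon> / 2)" using assms by simp
    have "integrable lborel (\<lambda>t. normal_density 0 (sqrt (\<epsilon> / 2)) t * (t - 0)^2)"
      by (rule integrable_normal_moment[OF s])
    moreover note s
    ultimately show ?thesis using True assms unfolding h_def
      by (simp add: nn_integral_eq_integral)
  next
    case False
    moreover have "0 < sqrt (\<epsilon> / 2)" using assms by simp
    ultimately show ?thesis unfolding h_def by (simp add: nn_integral_eq_integral)
  qed
  have "(\<integral>\<^sup>+z. ennreal (gk \<epsilon> z * (norm z)\<^sup>2) \<partial>(lborel::(real^'d) measure))
      = (\<Sum>j\<in>UNIV. \<integral>\<^sup>+z. ennreal (\<Prod>i\<in>UNIV. h j i (z$i)) \<partial>(lborel::(real^'d) measure))"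
    unfolding eq
  proof -
    have "(\<integral>\<^sup>+z. ennreal (\<Sum>j\<in>UNIV. \<Prod>i\<in>UNIV. h j i (z$i)) \<partial>(lborel::(real^'d) measure))
       = (\<integral>\<^sup>+z. (\<Sum>j\<in>UNIV. ennreal (\<Prod>i\<in>UNIV. h j i (z$i))) \<partial>(lborel::(real^'d) measure))"
      by (intro nn_integral_cong sum_ennreal[symmetric]) (auto simp: h_def prod_nonneg)
    also have "\<dots> = (\<Sum>j\<in>UNIV. \<integral>\<^sup>+z. ennreal (\<Prod>i\<in>UNIV. h j i (z$i)) \<partial>(lborel::(real^'d) measure))"
      by (intro nn_integral_sum) (auto simp: h_def)
    finally show "(\<integral>\<^sup>+z. ennreal (\<Sum>j\<in>UNIV. \<Prod>i\<in>UNIV. h j i (z$i)) \<partial>(lborel::(real^'d) measure))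
       = (\<Sum>j\<in>UNIV. \<integral>\<^sup>+z. ennreal (\<Prod>i\<in>UNIV. h j i (z$i)) \<partial>(lborel::(real^'d) measure))" .
  qed
  also have "\<dots> = (\<Sum>j\<in>UNIV. \<Prod>i\<in>UNIV. \<integral>\<^sup>+t. ennreal (h j i t) \<partial>lborel)"
    by (intro sum.cong refl nn_integral_vec_prod) (auto simp: h_def)
  also have "\<dots> < \<infinity>"
    using fin by (simp add: ennreal_sum_less_top top.not_eq_extremum[symmetric] ennreal_prod_eq_top)
  finally show ?thesis .
qed


thm Bochner_Integration.integral_indicator

lemma kl_core:
  fixes a b :: real assumes "a > 0" "b > 0"
  shows "a * ln a - a * ln b - a + b \<ge> (sqrt a - sqrt b)\<^sup>2"
proof -
  define u v where "u = sqrt a" "v = sqrt b"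
  have u: "u > 0" "a = u\<^sup>2" and v: "v > 0" "b = v\<^sup>2" using assms by (auto simp: u_v_def)
  have "ln (v / u) \<le> v / u - 1" using u v by (intro ln_le_minus_one) simp
  then have "ln v - ln u \<le> v / u - 1" using u v by (simp add: ln_div)
  then have "u\<^sup>2 * (ln v - ln u) \<le> u\<^sup>2 * (v / u - 1)" using u by (intro mult_left_mono) auto
  also have "u\<^sup>2 * (v / u - 1) = u * v - u\<^sup>2" using u by (simp add: power2_eq_square field_simps)
  finally have *: "u\<^sup>2 * (ln v - ln u) \<le> u * v - u\<^sup>2" .
  have "ln a = 2 * ln u" "ln b = 2 * ln v" using u v by (simp_all add: ln_realpow)
  then have "a * ln a - a * ln b - a + b = 2 * (u\<^sup>2 * (ln u - ln v)) - u\<^sup>2 + v\<^sup>2"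
    using u v by (simp add: algebra_simps)
  also have "\<dots> \<ge> (u - v)\<^sup>2" using * by (simp add: power2_eq_square algebra_simps)
  finally show ?thesis by (simp add: u_v_def)
qed

lemma tv_core:
  fixes a b t :: real assumes "a > 0" "b > 0" "t > 0"
  shows "\<bar>a - b\<bar> \<le> (a * ln a - a * ln b - a + b) / (2 * t) + t * (a + b)"
proof -
  define u v where "u = sqrt a" "v = sqrt b"
  have u: "u > 0" "a = u\<^sup>2" and v: "v > 0" "b = v\<^sup>2" using assms by (auto simp: u_v_def)
  have k: "(u - v)\<^sup>2 \<le> a * ln a - a * ln b - a + b" using kl_core[OF assms(1,2)] by (simp add: u_v_def)
  have "a - b = (u - v) * (u + v)" using u v by (simp add: power2_eq_square algebra_simps)
  then have "\<bar>a - b\<bar> = \<bar>u - v\<bar> * (u + v)" using u v by (simp add: abs_mult)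
  also have "\<dots> \<le> (u - v)\<^sup>2 / (2 * t) + t * (u + v)\<^sup>2 / 2"
  proof -
    have "0 \<le> (\<bar>u - v\<bar> - t * (u + v))\<^sup>2" by simp
    then have "2 * t * (\<bar>u - v\<bar> * (u + v)) \<le> (u - v)\<^sup>2 + t\<^sup>2 * (u + v)\<^sup>2"
      by (simp add: power2_eq_square algebra_simps abs_mult_self_eq)
    then show ?thesis using assms(3) by (simp add: field_simps power2_eq_square)
  qed
  also have "\<dots> \<le> (a * ln a - a * ln b - a + b) / (2 * t) + t * (a + b)"
  proof -
    have "0 \<le> (u - v)\<^sup>2" by simp
    then have "(u + v)\<^sup>2 / 2 \<le> a + b" using u v by (simp add: power2_eq_square algebra_simps)
    then show ?thesis using k assms(3)
      by (intro add_mono divide_right_mono) (auto simp: mult_left_mono)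
  qed
  finally show ?thesis .
qed


lemma phi_expr:
  fixes a p G cc \<epsilon> C :: real
  assumes "a > 0" "p > 0" "G > 0" "\<epsilon> > 0" "ln G = - cc / \<epsilon> - C"
  shows "a * ln a + a * cc / \<epsilon> - a * ln p + a * C - a + p * G
       = a * ln a - a * ln (p * G) - a + p * G"
proof -
  have "cc / \<epsilon> = - ln G - C" using assms(5) by simp
  then have h: "a * cc / \<epsilon> = a * (- ln G - C)" by (metis times_divide_eq_right)
  show ?thesis unfolding h using assms by (simp add: ln_mult algebra_simps)
qed

lemma phi_nonneg:
  fixes a p G cc \<epsilon> C :: real
  assumes "a \<ge> 0" "p \<ge> 0" "G > 0" "p = 0 \<longrightarrow> a = 0" "\<epsilon> > 0" "ln G = - cc / \<epsilon> - C"
  shows "0 \<le> a * ln a + a * cc / \<epsilon> - a * ln p + a * C - a + p * G"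
proof (cases "a = 0")
  case True then show ?thesis using assms by simp
next
  case False
  then have a: "a > 0" and p: "p > 0" using assms by auto
  have "0 \<le> (sqrt a - sqrt (p * G))\<^sup>2" by simp
  also have "\<dots> \<le> a * ln a - a * ln (p * G) - a + p * G"
    using a p assms by (intro kl_core) auto
  finally show ?thesis using phi_expr[OF a p assms(3,5,6)] by simp
qed

lemma phi_tv:
  fixes a p G cc \<epsilon> C t :: real
  assumes "a \<ge> 0" "p \<ge> 0" "G > 0" "p = 0 \<longrightarrow> a = 0" "\<epsilon> > 0" "ln G = - cc / \<epsilon> - C" "t > 0"
  shows "\<bar>a - p * G\<bar> \<le> (a * ln a + a * cc / \<epsilon> - a * ln p + a * C - a + p * G) / (2 * t) + t * (a + p * G)"
proof (cases "a = 0")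
  case True
  have b: "p * G \<ge> 0" using assms by simp
  have "0 < 2 * t * t - 2 * t + 1"
  proof -
    have "0 \<le> (2 * t - 1)\<^sup>2" by simp
    then show ?thesis by (simp add: power2_eq_square algebra_simps)
  qed
  then have "1 \<le> 1 / (2 * t) + t" using assms(7) by (simp add: field_simps)
  then have "p * G * 1 \<le> p * G * (1 / (2 * t) + t)" using b by (intro mult_left_mono) auto
  then show ?thesis using True b by (simp add: algebra_simps)
next
  case False
  then have a: "a > 0" and p: "p > 0" using assms by auto
  show ?thesis unfolding phi_expr[OF a p assms(3,5,6)] using tv_core[OF a _ assms(7), of "p * G"] p assms(3) by simp
qed



lemma fst_borel[measurable]: "fst \<in> (borel::('a::euclidean_space \<times> 'b::euclidean_space) measure) \<rightarrow>\<^sub>M borel"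
  by (subst borel_prod[symmetric]) simp

lemma snd_borel[measurable]: "snd \<in> (borel::('a::euclidean_space \<times> 'b::euclidean_space) measure) \<rightarrow>\<^sub>M borel"
  by (subst borel_prod[symmetric]) simp

lemma fst_vimage_borel[measurable]: "A \<in> sets borel \<Longrightarrow> fst -` A \<in> sets (borel::('a::euclidean_space \<times> 'b::euclidean_space) measure)"
  using measurable_sets[OF fst_borel, of A] by simp

lemma snd_vimage_borel[measurable]: "A \<in> sets borel \<Longrightarrow> snd -` A \<in> sets (borel::('a::euclidean_space \<times> 'b::euclidean_space) measure)"
  using measurable_sets[OF snd_borel, of A] by simp

lemma prob_emeasure_fin: "prob_space Q \<Longrightarrow> emeasure Q A < top"
proof -
  assume "prob_space Q"
  then interpret prob_space Q .
  show ?thesis by (simp add: less_top[symmetric])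
qed

lemma ennreal_abs_split: "ennreal \<bar>x::real\<bar> = ennreal x + ennreal (- x)"
  by (cases "0 \<le> x") (simp_all add: ennreal_neg)

lemma dens_facts:
  assumes "\<pi> \<in> couplings P Q" "has_leb_density \<pi> r"
  shows "\<pi> = density lborel (\<lambda>z. ennreal (r z))" "r \<in> borel_measurable borel" "\<And>z. 0 \<le> r z"
    "distr (density lborel (\<lambda>z. ennreal (r z))) borel fst = P"
    "distr (density lborel (\<lambda>z. ennreal (r z))) borel snd = Q"
    "prob_space (density lborel (\<lambda>z. ennreal (r z)))"
  using assms unfolding couplings_def has_leb_density_def by (auto simp: measurable_lborel1)

lemma dens_nn_marg:
  fixes r :: "'b::euclidean_space \<Rightarrow> real" and proj :: "'b \<Rightarrow> 'a::euclidean_space"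
  assumes [measurable]: "r \<in> borel_measurable borel" "proj \<in> borel \<rightarrow>\<^sub>M borel" "h \<in> borel_measurable borel"
    and R: "distr (density lborel (\<lambda>z. ennreal (r z))) borel proj = R"
  shows "(\<integral>\<^sup>+z. ennreal (r z) * h (proj z) \<partial>lborel) = integral\<^sup>N R h"
proof -
  have "(\<integral>\<^sup>+z. ennreal (r z) * h (proj z) \<partial>lborel) = (\<integral>\<^sup>+z. h (proj z) \<partial>density lborel (\<lambda>z. ennreal (r z)))"
    by (subst nn_integral_density) auto
  also have "\<dots> = (\<integral>\<^sup>+x. h x \<partial>distr (density lborel (\<lambda>z. ennreal (r z))) borel proj)"
    by (subst nn_integral_distr) auto
  finally show ?thesis using R by simp
qed

lemma dens_int_marg:
  fixes r :: "'b::euclidean_space \<Rightarrow> real" and proj :: "'b \<Rightarrow> 'a::euclidean_space"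
    and f :: "'a \<Rightarrow> real"
  assumes [measurable]: "r \<in> borel_measurable borel" "proj \<in> borel \<rightarrow>\<^sub>M borel" "f \<in> borel_measurable borel"
    and rnn: "\<And>z. 0 \<le> r z"
    and R: "distr (density lborel (\<lambda>z. ennreal (r z))) borel proj = R"
    and fi: "integrable R f"
  shows "has_bochner_integral lborel (\<lambda>z. r z * f (proj z)) (integral\<^sup>L R f)"
proof -
  have i1: "integrable (density lborel (\<lambda>z. ennreal (r z))) (\<lambda>z. f (proj z))"
    using fi unfolding R[symmetric] by (subst (asm) integrable_distr_eq) auto
  have i2: "integrable lborel (\<lambda>z. r z * f (proj z))"
    using i1 rnn by (subst (asm) integrable_density) auto
  have "integral\<^sup>L R f = integral\<^sup>L (density lborel (\<lambda>z. ennreal (r z))) (\<lambda>z. f (proj z))"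
    unfolding R[symmetric] by (subst integral_distr) auto
  also have "\<dots> = integral\<^sup>L lborel (\<lambda>z. r z * f (proj z))"
    using rnn by (subst integral_density) auto
  finally show ?thesis using i2 by (simp add: has_bochner_integral_integrable)
qed

locale ew_setup =
  fixes \<epsilon> :: real and P :: "'a::euclidean_space measure" and rP :: "'a \<Rightarrow> real"
    and g :: "'a \<Rightarrow> real" and C :: real
  assumes eps: "\<epsilon> > 0"
    and probP: "prob_space P"
    and densP: "has_leb_density P rP"
    and logint: "integrable P (\<lambda>x. ln (rP x))"
    and g_meas[measurable]: "g \<in> borel_measurable borel"
    and g_pos: "\<And>z. g z > 0"
    and g_int: "(\<integral>\<^sup>+z. ennreal (g z) \<partial>lborel) = 1"
    and g_mom: "(\<integral>\<^sup>+z. ennreal (g z * (norm z)\<^sup>2) \<partial>lborel) < \<infinity>"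
    and ln_g: "\<And>z. ln (g z) = - (norm z)\<^sup>2 / \<epsilon> - C"
begin

lemma rP_meas[measurable]: "rP \<in> borel_measurable borel"
  using densP unfolding has_leb_density_def by (simp add: measurable_lborel1)

lemma rP_nn: "0 \<le> rP x"
  using densP unfolding has_leb_density_def by simp

lemma P_eq: "P = density lborel (\<lambda>x. ennreal (rP x))"
  using densP unfolding has_leb_density_def by simp

lemma g_nn: "0 \<le> g x"
  using g_pos[of x] by simp

definition q :: "'a \<times> 'a \<Rightarrow> real" where "q z = rP (fst z) * g (snd z - fst z)"

lemma q_meas[measurable]: "q \<in> borel_measurable borel"
  unfolding q_def by measurable

lemma q_nn: "0 \<le> q z"
  unfolding q_def by (simp add: rP_nn g_nn)

lemma L0:
  assumes [measurable]: "h \<in> borel_measurable borel"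
  shows "(\<integral>\<^sup>+z. ennreal (q z) * h z \<partial>(lborel::('a\<times>'a) measure))
    = (\<integral>\<^sup>+x. ennreal (rP x) * (\<integral>\<^sup>+y. ennreal (g y) * h (x, x + y) \<partial>lborel) \<partial>lborel)"
proof -
  have "(\<integral>\<^sup>+z. ennreal (q z) * h z \<partial>(lborel::('a\<times>'a) measure))
      = (\<integral>\<^sup>+z. ennreal (q z) * h z \<partial>(lborel \<Otimes>\<^sub>M lborel))"
    by (simp add: lborel_prod)
  also have "\<dots> = (\<integral>\<^sup>+x. \<integral>\<^sup>+y. ennreal (q (x,y)) * h (x,y) \<partial>lborel \<partial>lborel)"
    by (rule sigma_finite_measure.nn_integral_fst[symmetric, OF sigma_finite_lborel]) (simp add: lborel_prod)
  also have "\<dots> = (\<integral>\<^sup>+x. ennreal (rP x) * (\<integral>\<^sup>+y. ennreal (g y) * h (x, x + y) \<partial>lborel) \<partial>lborel)"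
  proof (rule nn_integral_cong)
    fix x :: 'a
    have "(\<integral>\<^sup>+y. ennreal (q (x,y)) * h (x,y) \<partial>lborel)
        = (\<integral>\<^sup>+y. ennreal (rP x) * (ennreal (g (y - x)) * h (x,y)) \<partial>lborel)"
      by (intro nn_integral_cong) (simp add: q_def ennreal_mult rP_nn g_nn mult.assoc)
    also have "\<dots> = ennreal (rP x) * (\<integral>\<^sup>+y. ennreal (g (y - x)) * h (x,y) \<partial>lborel)"
      by (rule nn_integral_cmult) measurable
    also have "(\<integral>\<^sup>+y. ennreal (g (y - x)) * h (x,y) \<partial>lborel)
        = (\<integral>\<^sup>+y. ennreal (g (y - x)) * h (x,y) \<partial>distr lborel borel ((+) x))"
      by (simp add: lborel_distr_plus)
    also have "\<dots> = (\<integral>\<^sup>+y. ennreal (g y) * h (x, x + y) \<partial>lborel)"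
      by (subst nn_integral_distr) auto
    finally show "(\<integral>\<^sup>+y. ennreal (q (x,y)) * h (x,y) \<partial>lborel)
       = ennreal (rP x) * (\<integral>\<^sup>+y. ennreal (g y) * h (x, x + y) \<partial>lborel)" .
  qed
  finally show ?thesis .
qed

definition Pstar :: "('a \<times> 'a) measure" where
  "Pstar = density lborel (\<lambda>z. ennreal (q z))"

definition Qstar :: "'a measure" where
  "Qstar = distr Pstar borel snd"

lemma int_rP: "(\<integral>\<^sup>+x. ennreal (rP x) \<partial>lborel) = 1"
proof -
  have "emeasure P (space P) = 1" using probP by (simp add: prob_space.emeasure_space_1)
  then show ?thesis unfolding P_eq by (simp add: emeasure_density)
qed

lemma Pstar_prob: "prob_space Pstar"
proof (rule prob_spaceI)
  have "emeasure Pstar (space Pstar) = (\<integral>\<^sup>+z. ennreal (q z) * 1 \<partial>lborel)"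
    unfolding Pstar_def by (simp add: emeasure_density)
  also have "\<dots> = (\<integral>\<^sup>+x. ennreal (rP x) * (\<integral>\<^sup>+y. ennreal (g y) * 1 \<partial>lborel) \<partial>lborel)"
    by (rule L0) simp
  also have "\<dots> = 1" by (simp add: g_int int_rP)
  finally show "emeasure Pstar (space Pstar) = 1" .
qed

lemma sets_Pstar[simp]: "sets Pstar = sets borel"
  unfolding Pstar_def by simp

lemma Pstar_fst: "distr Pstar borel fst = P"
proof (rule measure_eqI)
  show "sets (distr Pstar borel fst) = sets P" by (simp add: P_eq)
  fix A assume "A \<in> sets (distr Pstar borel fst)"
  then have [measurable]: "A \<in> sets borel" by simp
  have "emeasure (distr Pstar borel fst) A = emeasure Pstar (fst -` A)"
    by (subst emeasure_distr) (auto simp: Pstar_def)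
  also have "\<dots> = (\<integral>\<^sup>+z. ennreal (q z) * indicator A (fst z) \<partial>lborel)"
    unfolding Pstar_def by (subst emeasure_density) (auto intro!: nn_integral_cong split: split_indicator)
  also have "\<dots> = (\<integral>\<^sup>+x. ennreal (rP x) * (\<integral>\<^sup>+y. ennreal (g y) * indicator A x \<partial>lborel) \<partial>lborel)"
    using L0[of "\<lambda>z. indicator A (fst z)"] by simp
  also have "\<dots> = (\<integral>\<^sup>+x. ennreal (rP x) * indicator A x \<partial>lborel)"
    by (intro nn_integral_cong) (simp add: nn_integral_multc g_int)
  also have "\<dots> = emeasure P A"
    unfolding P_eq by (simp add: emeasure_density)
  finally show "emeasure (distr Pstar borel fst) A = emeasure P A" .
qed

lemma Pstar_coupling: "Pstar \<in> couplings P Qstar"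
  unfolding couplings_def Qstar_def using Pstar_prob Pstar_fst by simp

lemma Qstar_prob: "is_prob Qstar"
  unfolding is_prob_def Qstar_def using Pstar_prob
  by (auto intro!: prob_space.prob_space_distr simp: Pstar_def)


definition c :: "'a \<times> 'a \<Rightarrow> real" where "c z = (norm (fst z - snd z))\<^sup>2"

lemma c_meas[measurable]: "c \<in> borel_measurable borel"
  unfolding c_def by measurable

lemma c_nn: "0 \<le> c z" unfolding c_def by simp

definition HP :: real where "HP = integral\<^sup>L P (\<lambda>x. ln (rP x))"

definition Mv :: real where "Mv = \<epsilon> * HP - \<epsilon> * C"

definition Phi :: "('a \<times> 'a \<Rightarrow> real) \<Rightarrow> 'a \<times> 'a \<Rightarrow> real" where
  "Phi r z = r z * ln (r z) + r z * c z / \<epsilon> - r z * ln (rP (fst z)) + r z * C - r z + q z"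

lemma ln_g_c: "ln (g (snd z - fst z)) = - c z / \<epsilon> - C"
  by (simp add: ln_g c_def norm_minus_commute)

lemma AE_zero:
  assumes "\<pi> \<in> couplings P Q" "has_leb_density \<pi> r"
  shows "AE z in lborel. rP (fst z) = 0 \<longrightarrow> r z = 0"
proof -
  note df = dens_facts[OF assms]
  have [measurable]: "r \<in> borel_measurable borel" by (rule df(2))
  let ?h = "indicator {x. rP x = 0} :: 'a \<Rightarrow> ennreal"
  have "(\<integral>\<^sup>+z. ennreal (r z) * ?h (fst z) \<partial>lborel) = integral\<^sup>N P ?h"
    by (rule dens_nn_marg[OF _ _ _ df(4)]) auto
  also have "\<dots> = (\<integral>\<^sup>+x. ennreal (rP x) * ?h x \<partial>lborel)"
    unfolding P_eq by (subst nn_integral_density) auto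
  also have "\<dots> = (\<integral>\<^sup>+x. 0 \<partial>(lborel::'a measure))"
    by (intro nn_integral_cong) (auto simp: indicator_def)
  finally have "(\<integral>\<^sup>+z. ennreal (r z) * ?h (fst z) \<partial>lborel) = 0" by simp
  then have "AE z in lborel. ennreal (r z) * ?h (fst z) = 0"
    by (subst (asm) nn_integral_0_iff_AE) auto
  then show ?thesis
  proof eventually_elim
    case (elim z)
    have "0 \<le> r z" by (rule df(3))
    then show ?case using elim by (simp add: indicator_def ennreal_eq_0_iff; blast)
  qed
qed

lemma q_hasint: "has_bochner_integral lborel q 1"
proof -
  have "(\<integral>\<^sup>+z. ennreal (q z) \<partial>lborel) = emeasure Pstar (space Pstar)"
    unfolding Pstar_def by (simp add: emeasure_density)
  also have "\<dots> = 1" using Pstar_prob by (simp add: prob_space.emeasure_space_1)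
  finally show ?thesis
    by (intro has_bochner_integral_nn_integral) (auto simp: q_nn)
qed

lemma main:
  assumes pi: "\<pi> \<in> couplings P Q" and dens: "has_leb_density \<pi> r"
    and costfin: "quad_cost \<pi> \<noteq> \<infinity>"
    and Ipfin: "(\<integral>\<^sup>+z. ennreal (max 0 (r z * ln (r z))) \<partial>lborel) < \<infinity>"
  shows "integrable lborel (Phi r)"
    "quad_cost \<pi> + ereal \<epsilon> * (enn2ereal (\<integral>\<^sup>+z. ennreal (max 0 (r z * ln (r z))) \<partial>lborel)
        - enn2ereal (\<integral>\<^sup>+z. ennreal (max 0 (- (r z * ln (r z)))) \<partial>lborel))
      = ereal (Mv + \<epsilon> * integral\<^sup>L lborel (Phi r))"
    "0 \<le> integral\<^sup>L lborel (Phi r)"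
    "\<And>A t. A \<in> sets borel \<Longrightarrow> t > 0 \<Longrightarrow>
        \<bar>measure Q A - measure Qstar A\<bar> \<le> integral\<^sup>L lborel (Phi r) / (2 * t) + 2 * t"
proof -
  note df = dens_facts[OF pi dens]
  have rm[measurable]: "r \<in> borel_measurable borel" by (rule df(2))
  have rnn: "\<And>z. 0 \<le> r z" by (rule df(3))
  have piq: "\<pi> = density lborel (\<lambda>z. ennreal (r z))" by (rule df(1))
  have AE0: "AE z in lborel. rP (fst z) = 0 \<longrightarrow> r z = 0" by (rule AE_zero[OF pi dens])
  have r_hasint: "has_bochner_integral lborel r 1"
  proof -
    have "(\<integral>\<^sup>+z. ennreal (r z) \<partial>lborel) = emeasure \<pi> (space \<pi>)"
      unfolding piq by (simp add: emeasure_density)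
    also have "\<dots> = 1" using prob_space.emeasure_space_1[OF df(6)] piq by simp
    finally show ?thesis
      by (intro has_bochner_integral_nn_integral) (auto simp: rnn)
  qed
  define K where "K = (\<integral>\<^sup>+z. ennreal (r z * c z) \<partial>lborel)"
  have qc: "quad_cost \<pi> = enn2ereal K"
  proof -
    have "quad_cost \<pi> = enn2ereal (\<integral>\<^sup>+z. ennreal (c z) \<partial>\<pi>)"
      unfolding quad_cost_def c_def ..
    also have "(\<integral>\<^sup>+z. ennreal (c z) \<partial>\<pi>) = K"
      unfolding piq K_def by (subst nn_integral_density) (auto simp: ennreal_mult rnn c_nn)
    finally show ?thesis .
  qed
  have Kfin: "K < \<top>" using costfin qc by (simp add: enn2ereal_eq_top_iff top.not_eq_extremum)
  define Kr where "Kr = enn2real K"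
  have K_eq: "K = ennreal Kr" using Kfin unfolding Kr_def by (simp add: less_top)
  have Kr_nn: "0 \<le> Kr" by (simp add: Kr_def)
  have qc': "quad_cost \<pi> = ereal Kr" unfolding qc K_eq using Kr_nn by (rule enn2ereal_ennreal)
  have rc_hasint: "has_bochner_integral lborel (\<lambda>z. r z * c z) Kr"
  proof (rule has_bochner_integral_nn_integral)
    show "(\<lambda>z. r z * c z) \<in> borel_measurable lborel" by measurable
    show "AE z in lborel. 0 \<le> r z * c z" by (simp add: rnn c_nn)
    show "0 \<le> Kr" by (rule Kr_nn)
    show "(\<integral>\<^sup>+z. ennreal (r z * c z) \<partial>lborel) = ennreal Kr" using K_eq by (simp only: K_def)
  qed
  have lm: "has_bochner_integral lborel (\<lambda>z. r z * ln (rP (fst z))) HP"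
    unfolding HP_def by (rule dens_int_marg[OF _ _ _ rnn df(4) logint]) auto
  define f where "f z = r z * ln (r z)" for z
  have fm[measurable]: "f \<in> borel_measurable borel" unfolding f_def by measurable
  define B where "B z = r z * c z / \<epsilon> + \<bar>r z * ln (rP (fst z))\<bar> + r z * \<bar>C\<bar> + q z" for z
  have B_int: "integrable lborel B"
  proof -
    have i0: "integrable lborel (\<lambda>z. r z * c z)" "integrable lborel (\<lambda>z. r z * ln (rP (fst z)))"
      "integrable lborel r" "integrable lborel q"
      using rc_hasint lm r_hasint q_hasint by (simp_all add: has_bochner_integral_iff)
    have i1: "integrable lborel (\<lambda>z. r z * c z / \<epsilon>)" by (rule integrable_divide_zero) (rule i0(1))
    have i2: "integrable lborel (\<lambda>z. \<bar>r z * ln (rP (fst z))\<bar>)" by (rule integrable_abs) (rule i0(2))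
    have i3: "integrable lborel (\<lambda>z. r z * \<bar>C\<bar>)" by (rule integrable_mult_left) (rule i0(3))
    have "integrable lborel (\<lambda>z. r z * c z / \<epsilon> + \<bar>r z * ln (rP (fst z))\<bar>)"
      by (rule Bochner_Integration.integrable_add[OF i1 i2])
    then have "integrable lborel (\<lambda>z. r z * c z / \<epsilon> + \<bar>r z * ln (rP (fst z))\<bar> + r z * \<bar>C\<bar>)"
      by (rule Bochner_Integration.integrable_add[OF _ i3])
    then show ?thesis unfolding B_def
      by (rule Bochner_Integration.integrable_add[OF _ i0(4)])
  qed
  have phi_nn: "AE z in lborel. 0 \<le> Phi r z"
    using AE0
  proof eventually_elim
    case (elim z)
    show ?case unfolding Phi_def q_def
      using elim rnn[of z] rP_nn[of "fst z"] g_pos[of "snd z - fst z"] eps ln_g_c[of z]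
      by (intro phi_nonneg) auto
  qed
  have negB: "AE z in lborel. max 0 (- f z) \<le> B z"
    using phi_nn
  proof eventually_elim
    case (elim z)
    have "- (r z * ln (rP (fst z))) \<le> \<bar>r z * ln (rP (fst z))\<bar>" by simp
    moreover have "r z * C \<le> r z * \<bar>C\<bar>" using rnn[of z] by (intro mult_left_mono) auto
    moreover have "0 \<le> r z * c z / \<epsilon>" using rnn[of z] c_nn[of z] eps by simp
    moreover have "0 \<le> r z * \<bar>C\<bar>" using rnn[of z] by simp
    ultimately have "- f z \<le> B z" "0 \<le> B z" using elim rnn[of z] q_nn[of z] unfolding Phi_def B_def f_def
      by linarith+
    then show ?case by simp
  qed
  have Infin: "(\<integral>\<^sup>+z. ennreal (max 0 (- f z)) \<partial>lborel) < \<infinity>"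
  proof -
    have "(\<integral>\<^sup>+z. ennreal (max 0 (- f z)) \<partial>lborel) \<le> (\<integral>\<^sup>+z. ennreal (norm (B z)) \<partial>lborel)"
    proof (intro nn_integral_mono_AE)
      show "AE z in lborel. ennreal (max 0 (- f z)) \<le> ennreal (norm (B z))"
        using negB by eventually_elim (intro ennreal_leI, metis abs_ge_self order_trans real_norm_def)
    qed
    also have "\<dots> < \<infinity>" using B_int by (simp add: integrable_iff_bounded)
    finally show ?thesis .
  qed
  have Ipfin': "(\<integral>\<^sup>+z. ennreal (max 0 (f z)) \<partial>lborel) < \<infinity>" using Ipfin by (simp add: f_def)
  have f_int: "integrable lborel f"
  proof -
    have "(\<integral>\<^sup>+z. ennreal (norm (f z)) \<partial>lborel)
        = (\<integral>\<^sup>+z. ennreal (max 0 (f z)) + ennreal (max 0 (- f z)) \<partial>lborel)"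
      by (intro nn_integral_cong) (simp add: ennreal_abs_split)
    also have "\<dots> = (\<integral>\<^sup>+z. ennreal (max 0 (f z)) \<partial>lborel) + (\<integral>\<^sup>+z. ennreal (max 0 (- f z)) \<partial>lborel)"
      by (intro nn_integral_add) auto
    also have "\<dots> < \<infinity>" using Infin Ipfin' by simp
    finally show ?thesis by (simp add: integrable_iff_bounded)
  qed
  define E where "E = integral\<^sup>L lborel f"
  have entr: "enn2ereal (\<integral>\<^sup>+z. ennreal (max 0 (r z * ln (r z))) \<partial>lborel)
        - enn2ereal (\<integral>\<^sup>+z. ennreal (max 0 (- (r z * ln (r z)))) \<partial>lborel) = ereal E"
  proof -
    define Ip where "Ip = (\<integral>\<^sup>+z. ennreal (f z) \<partial>lborel)"
    define In where "In = (\<integral>\<^sup>+z. ennreal (- f z) \<partial>lborel)"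
    have Ip: "Ip = ennreal (enn2real Ip)" using Ipfin' by (simp add: Ip_def ennreal_max_0 less_top)
    have In: "In = ennreal (enn2real In)" using Infin by (simp add: In_def ennreal_max_0 less_top)
    have "E = enn2real Ip - enn2real In"
      unfolding E_def Ip_def In_def by (rule real_lebesgue_integral_def[OF f_int])
    moreover have "enn2ereal Ip = ereal (enn2real Ip)" by (subst Ip) simp
    moreover have "enn2ereal In = ereal (enn2real In)" by (subst In) simp
    ultimately show ?thesis by (simp add: Ip_def In_def f_def[symmetric] ennreal_max_0)
  qed
  have Phi_eq: "Phi r = (\<lambda>z. f z + r z * c z / \<epsilon> - r z * ln (rP (fst z)) + r z * C - r z + q z)"
    by (simp add: Phi_def f_def fun_eq_iff)
  have Phi_hasint: "has_bochner_integral lborel (Phi r) (E + Kr / \<epsilon> - HP + 1 * C - 1 + 1)"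
    unfolding Phi_eq
    by (intro has_bochner_integral_add has_bochner_integral_diff has_bochner_integral_divide_zero
        has_bochner_integral_mult_left rc_hasint lm r_hasint q_hasint)
      (simp add: E_def f_int has_bochner_integral_integrable)
  have Phi_int: "integral\<^sup>L lborel (Phi r) = E + Kr / \<epsilon> - HP + C"
    using has_bochner_integral_integral_eq[OF Phi_hasint] by simp
  show "integrable lborel (Phi r)" using Phi_hasint by (simp add: has_bochner_integral_iff)
  show "quad_cost \<pi> + ereal \<epsilon> * (enn2ereal (\<integral>\<^sup>+z. ennreal (max 0 (r z * ln (r z))) \<partial>lborel)
        - enn2ereal (\<integral>\<^sup>+z. ennreal (max 0 (- (r z * ln (r z)))) \<partial>lborel))
      = ereal (Mv + \<epsilon> * integral\<^sup>L lborel (Phi r))"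
    unfolding entr qc' Phi_int Mv_def using eps by (simp add: field_simps)
  show "0 \<le> integral\<^sup>L lborel (Phi r)"
    by (rule integral_nonneg_AE[OF phi_nn])
  fix A :: "'a set" and t :: real
  assume A[measurable]: "A \<in> sets borel" and t: "t > 0"
  have Qsp: "space Q = UNIV" "sets Q = sets borel" using df(5) by auto
  have Qp: "prob_space Q"
  proof -
    have "snd \<in> density lborel (\<lambda>z. ennreal (r z)) \<rightarrow>\<^sub>M borel" by simp
    then show ?thesis using prob_space.prob_space_distr[OF df(6)] df(5) by blast
  qed
  have mQ: "has_bochner_integral lborel (\<lambda>z. r z * indicator A (snd z)) (measure Q A)"
  proof -
    have "integrable Q (indicator A :: 'a \<Rightarrow> real)"
      using Qsp Qp by (intro integrable_real_indicator) (auto intro: prob_emeasure_fin)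
    from dens_int_marg[OF rm snd_borel _ rnn df(5) this]
    show ?thesis using Qsp by (simp add: Bochner_Integration.integral_indicator)
  qed
  have Qssp: "space Qstar = UNIV" "sets Qstar = sets borel" by (auto simp: Qstar_def)
  have Qsp': "prob_space Qstar" using Qstar_prob by (simp add: is_prob_def)
  have mQs: "has_bochner_integral lborel (\<lambda>z. q z * indicator A (snd z)) (measure Qstar A)"
  proof -
    have "integrable Qstar (indicator A :: 'a \<Rightarrow> real)"
      using Qssp Qsp' by (intro integrable_real_indicator) (auto intro: prob_emeasure_fin)
    moreover have "distr (density lborel (\<lambda>z. ennreal (q z))) borel snd = Qstar"
      by (simp add: Qstar_def Pstar_def)
    ultimately have "has_bochner_integral lborel (\<lambda>z. q z * indicator A (snd z)) (integral\<^sup>L Qstar (indicator A))"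
      by (intro dens_int_marg) (auto simp: q_nn)
    then show ?thesis using Qssp by (simp add: Bochner_Integration.integral_indicator)
  qed
  have bound_int: "has_bochner_integral lborel (\<lambda>z. Phi r z / (2 * t) + t * (r z + q z))
      (integral\<^sup>L lborel (Phi r) / (2 * t) + t * (1 + 1))"
    using Phi_hasint r_hasint q_hasint has_bochner_integral_integral_eq[OF Phi_hasint]
    by (intro has_bochner_integral_add has_bochner_integral_divide_zero has_bochner_integral_mult_right) auto
  have diff_int: "has_bochner_integral lborel (\<lambda>z. (r z - q z) * indicator A (snd z)) (measure Q A - measure Qstar A)"
  proof -
    have "has_bochner_integral lborel (\<lambda>z. r z * indicator A (snd z) - q z * indicator A (snd z)) (measure Q A - measure Qstar A)"
      by (rule has_bochner_integral_diff[OF mQ mQs])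
    then show ?thesis by (simp add: algebra_simps)
  qed
  have AEb: "AE z in lborel. \<bar>(r z - q z) * indicator A (snd z)\<bar> \<le> Phi r z / (2 * t) + t * (r z + q z)"
    using AE0
  proof eventually_elim
    case (elim z)
    have "\<bar>r z - q z\<bar> \<le> Phi r z / (2 * t) + t * (r z + q z)"
      unfolding Phi_def q_def
      using elim rnn[of z] rP_nn[of "fst z"] g_pos[of "snd z - fst z"] eps ln_g_c[of z] t
      by (intro phi_tv) auto
    moreover have "\<bar>(r z - q z) * indicator A (snd z)\<bar> \<le> \<bar>r z - q z\<bar>"
      by (simp add: indicator_def)
    ultimately show ?case by linarith
  qed
  have "\<bar>measure Q A - measure Qstar A\<bar> = \<bar>integral\<^sup>L lborel (\<lambda>z. (r z - q z) * indicator A (snd z))\<bar>"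
    using has_bochner_integral_integral_eq[OF diff_int] by simp
  also have "\<dots> \<le> integral\<^sup>L lborel (\<lambda>z. \<bar>(r z - q z) * indicator A (snd z)\<bar>)"
    by (rule integral_abs_bound)
  also have "\<dots> \<le> integral\<^sup>L lborel (\<lambda>z. Phi r z / (2 * t) + t * (r z + q z))"
    using diff_int bound_int AEb
    by (intro integral_mono_AE) (auto simp: has_bochner_integral_iff)
  also have "\<dots> = integral\<^sup>L lborel (Phi r) / (2 * t) + 2 * t"
    using has_bochner_integral_integral_eq[OF bound_int] by simp
  finally show "\<bar>measure Q A - measure Qstar A\<bar> \<le> integral\<^sup>L lborel (Phi r) / (2 * t) + 2 * t" .
qed



lemma entropy_eq:
  assumes "has_leb_density \<mu> r"
  shows "entropy_leb \<mu> = enn2ereal (\<integral>\<^sup>+z. ennreal (max 0 (r z * ln (r z))) \<partial>lborel)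
        - enn2ereal (\<integral>\<^sup>+z. ennreal (max 0 (- (r z * ln (r z)))) \<partial>lborel)"
proof -
  define r' where "r' = (SOME r. has_leb_density \<mu> r)"
  have r': "has_leb_density \<mu> r'" unfolding r'_def using assms by (rule someI[where P="has_leb_density \<mu>"])
  have m: "r \<in> borel_measurable lborel" "r' \<in> borel_measurable lborel"
    and nn: "\<And>x. 0 \<le> r x" "\<And>x. 0 \<le> r' x"
    and eq: "density lborel (\<lambda>x. ennreal (r x)) = density lborel (\<lambda>x. ennreal (r' x))"
    using assms r' unfolding has_leb_density_def by auto
  have m1: "(\<lambda>x. ennreal (r x)) \<in> borel_measurable lborel" using m(1) by measurable
  have m2: "(\<lambda>x. ennreal (r' x)) \<in> borel_measurable lborel" using m(2) by measurable
  have "AE x in lborel. ennreal (r x) = ennreal (r' x)"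
    by (rule sigma_finite_measure.density_unique[OF sigma_finite_lborel m1 m2 eq])
  then have ae: "AE x in lborel. r' x = r x"
  proof eventually_elim
    case (elim x)
    then show ?case using nn(1)[of x] nn(2)[of x] by simp
  qed
  have "entropy_leb \<mu> = enn2ereal (\<integral>\<^sup>+z. ennreal (max 0 (r' z * ln (r' z))) \<partial>lborel)
        - enn2ereal (\<integral>\<^sup>+z. ennreal (max 0 (- (r' z * ln (r' z)))) \<partial>lborel)"
  proof -
    have ex: "\<exists>r. has_leb_density \<mu> r" using assms by blast
    show ?thesis unfolding entropy_leb_def r'_def[symmetric] if_P[OF ex] Let_def ..
  qed
  also have "(\<integral>\<^sup>+z. ennreal (max 0 (r' z * ln (r' z))) \<partial>lborel) = (\<integral>\<^sup>+z. ennreal (max 0 (r z * ln (r z))) \<partial>lborel)"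
  proof (rule nn_integral_cong_AE)
    show "AE z in lborel. ennreal (max 0 (r' z * ln (r' z))) = ennreal (max 0 (r z * ln (r z)))"
      using ae by eventually_elim (simp only:)
  qed
  also have "(\<integral>\<^sup>+z. ennreal (max 0 (- (r' z * ln (r' z)))) \<partial>lborel) = (\<integral>\<^sup>+z. ennreal (max 0 (- (r z * ln (r z)))) \<partial>lborel)"
  proof (rule nn_integral_cong_AE)
    show "AE z in lborel. ennreal (max 0 (- (r' z * ln (r' z)))) = ennreal (max 0 (- (r z * ln (r z))))"
      using ae by eventually_elim (simp only:)
  qed
  finally show ?thesis .
qed

lemma sq_bound:
  fixes d I :: real
  assumes "\<And>t. t > 0 \<Longrightarrow> \<bar>d\<bar> \<le> I / (2 * t) + 2 * t" "0 \<le> I"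
  shows "d\<^sup>2 / 4 \<le> I"
proof (cases "d = 0")
  case True
  then show ?thesis using assms(2) by simp
next
  case False
  define t where "t = \<bar>d\<bar> / 4"
  have t: "t > 0" using False by (simp add: t_def)
  have "\<bar>d\<bar> \<le> I / (2 * t) + 2 * t" using assms(1)[OF t] .
  then have "\<bar>d\<bar> \<le> 2 * I / \<bar>d\<bar> + \<bar>d\<bar> / 2" by (simp add: t_def)
  then have "\<bar>d\<bar> / 2 \<le> 2 * I / \<bar>d\<bar>" by simp
  then have "\<bar>d\<bar> / 2 * \<bar>d\<bar> \<le> 2 * I" using False by (simp add: field_simps)
  then have "\<bar>d\<bar> * \<bar>d\<bar> \<le> 4 * I" by simp
  then have "d * d \<le> 4 * I" by (simp only: abs_mult_self_eq)
  then show ?thesis by (simp add: power2_eq_square)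
qed



lemma value_lower:
  assumes pi: "\<pi> \<in> couplings P Q" and A: "A \<in> sets borel"
  shows "ereal (Mv + \<epsilon> * ((measure Q A - measure Qstar A)\<^sup>2 / 4)) \<le> quad_cost \<pi> + ereal \<epsilon> * entropy_leb \<pi>"
proof (cases "\<exists>r. has_leb_density \<pi> r")
  case False
  then have "entropy_leb \<pi> = \<infinity>" by (simp add: entropy_leb_def)
  then have "quad_cost \<pi> + ereal \<epsilon> * entropy_leb \<pi> = \<infinity>" using eps by simp
  then show ?thesis by (simp only: ereal_less_eq(1))
next
  case True
  then obtain r where dens: "has_leb_density \<pi> r" by blast
  define Ip where "Ip = (\<integral>\<^sup>+z. ennreal (max 0 (r z * ln (r z))) \<partial>lborel)"
  define In where "In = (\<integral>\<^sup>+z. ennreal (max 0 (- (r z * ln (r z)))) \<partial>lborel)"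
  have ent: "entropy_leb \<pi> = enn2ereal Ip - enn2ereal In"
    unfolding Ip_def In_def by (rule entropy_eq[OF dens])
  show ?thesis
  proof (cases "quad_cost \<pi> = \<infinity>")
    case True
    then have "quad_cost \<pi> + ereal \<epsilon> * entropy_leb \<pi> = \<infinity>" by simp
    then show ?thesis by (simp only: ereal_less_eq(1))
  next
    case cf: False
    show ?thesis
    proof (cases "Ip < \<infinity>")
      case False
      then have "Ip = \<top>" by (simp add: less_top[symmetric])
      then have "entropy_leb \<pi> = \<infinity>" unfolding ent by simp
      then have "quad_cost \<pi> + ereal \<epsilon> * entropy_leb \<pi> = \<infinity>" using eps by simp
      then show ?thesis by (simp only: ereal_less_eq(1))
    next
      case True
      note mm = main[OF pi dens cf True[unfolded Ip_def]]
      define I where "I = integral\<^sup>L lborel (Phi r)"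
      have val: "quad_cost \<pi> + ereal \<epsilon> * entropy_leb \<pi> = ereal (Mv + \<epsilon> * I)"
        unfolding ent Ip_def In_def I_def by (rule mm(2))
      have "(measure Q A - measure Qstar A)\<^sup>2 / 4 \<le> I"
      proof (rule sq_bound)
        fix t :: real assume "t > 0"
        then show "\<bar>measure Q A - measure Qstar A\<bar> \<le> I / (2 * t) + 2 * t"
          unfolding I_def by (rule mm(4)[OF A])
      next
        show "0 \<le> I" unfolding I_def by (rule mm(3))
      qed
      then have "Mv + \<epsilon> * ((measure Q A - measure Qstar A)\<^sup>2 / 4) \<le> Mv + \<epsilon> * I"
        using eps by simp
      then show ?thesis unfolding val by simp
    qed
  qed
qed

lemma Pstar_dens: "has_leb_density Pstar q"
  unfolding has_leb_density_def Pstar_def using q_nn by simp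

lemma c_shift: "c (x, x + y) = (norm y)\<^sup>2"
  by (simp add: c_def)

lemma Pstar_cost: "quad_cost Pstar \<noteq> \<infinity>"
proof -
  define Gm where "Gm = (\<integral>\<^sup>+y. ennreal (g y * (norm y)\<^sup>2) \<partial>lborel)"
  have "(\<integral>\<^sup>+z. ennreal ((norm (fst z - snd z))\<^sup>2) \<partial>Pstar) = (\<integral>\<^sup>+z. ennreal (q z) * ennreal (c z) \<partial>lborel)"
    unfolding Pstar_def c_def by (subst nn_integral_density) auto
  also have "\<dots> = (\<integral>\<^sup>+x. ennreal (rP x) * (\<integral>\<^sup>+y. ennreal (g y) * ennreal (c (x, x + y)) \<partial>lborel) \<partial>lborel)"
    by (rule L0) measurable
  also have "\<dots> = (\<integral>\<^sup>+x. ennreal (rP x) * Gm \<partial>lborel)"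
    unfolding Gm_def c_shift by (intro nn_integral_cong) (simp add: ennreal_mult g_nn)
  also have "\<dots> = Gm" by (simp add: nn_integral_multc int_rP)
  finally have "(\<integral>\<^sup>+z. ennreal ((norm (fst z - snd z))\<^sup>2) \<partial>Pstar) = Gm" .
  then show ?thesis using g_mom unfolding quad_cost_def Gm_def by (simp add: enn2ereal_eq_top_iff top.not_eq_extremum)
qed

lemma Pstar_Ip: "(\<integral>\<^sup>+z. ennreal (max 0 (q z * ln (q z))) \<partial>lborel) < \<infinity>"
proof -
  have i0: "integrable lborel (\<lambda>z. q z * ln (rP (fst z)))"
    using dens_int_marg[OF q_meas fst_borel _ q_nn Pstar_fst[unfolded Pstar_def] logint]
    by (simp add: has_bochner_integral_iff)
  have iq: "integrable lborel q" using q_hasint by (simp add: has_bochner_integral_iff)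
  define B2 where "B2 z = \<bar>q z * ln (rP (fst z))\<bar> + q z * \<bar>C\<bar>" for z
  have B2_int: "integrable lborel B2"
    unfolding B2_def by (intro Bochner_Integration.integrable_add integrable_abs i0 integrable_mult_left iq)
  have pw: "max 0 (q z * ln (q z)) \<le> B2 z" for z
  proof (cases "q z = 0")
    case True then show ?thesis by (simp add: B2_def q_nn)
  next
    case False
    then have qp: "q z > 0" using q_nn[of z] by simp
    have "rP (fst z) \<noteq> 0" using qp unfolding q_def by auto
    then have rp: "rP (fst z) > 0" using rP_nn[of "fst z"] by simp
    have "ln (q z) = ln (rP (fst z)) + ln (g (snd z - fst z))"
      unfolding q_def using rp g_pos[of "snd z - fst z"] by (simp add: ln_mult)
    also have "\<dots> \<le> ln (rP (fst z)) - C"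
      unfolding ln_g_c using c_nn[of z] eps by simp
    finally have "q z * ln (q z) \<le> q z * (ln (rP (fst z)) - C)"
      using qp by (intro mult_left_mono) auto
    also have "\<dots> \<le> \<bar>q z * ln (rP (fst z))\<bar> - q z * C" by (simp add: right_diff_distrib)
    also have "\<dots> \<le> B2 z"
    proof -
      have "- C \<le> \<bar>C\<bar>" by simp
      then have "q z * (- C) \<le> q z * \<bar>C\<bar>" using qp by (intro mult_left_mono) auto
      then show ?thesis unfolding B2_def by simp
    qed
    finally show ?thesis unfolding B2_def using qp by simp
  qed
  have "(\<integral>\<^sup>+z. ennreal (max 0 (q z * ln (q z))) \<partial>lborel) \<le> (\<integral>\<^sup>+z. ennreal (norm (B2 z)) \<partial>lborel)"
  proof (intro nn_integral_mono ennreal_leI)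
    fix z
    show "max 0 (q z * ln (q z)) \<le> norm (B2 z)"
      using order_trans[OF pw[of z] abs_ge_self[of "B2 z"]] by simp
  qed
  also have "\<dots> < \<infinity>" using B2_int unfolding integrable_iff_bounded by (rule conjunct2)
  finally show ?thesis .
qed

lemma Phi_q_zero: "Phi q z = 0"
proof (cases "rP (fst z) = 0")
  case True then show ?thesis by (simp add: Phi_def q_def)
next
  case False
  then have rp: "rP (fst z) > 0" using rP_nn[of "fst z"] by simp
  have "ln (q z) = ln (rP (fst z)) + ln (g (snd z - fst z))"
    unfolding q_def using rp g_pos[of "snd z - fst z"] by (simp add: ln_mult)
  then have "ln (q z) = ln (rP (fst z)) - c z / \<epsilon> - C"
    by (simp add: ln_g_c)
  then have "q z * ln (q z) = q z * (ln (rP (fst z)) - c z / \<epsilon> - C)"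
    by (simp only:)
  then show ?thesis unfolding Phi_def by (simp add: right_diff_distrib)
qed

lemma Pstar_value: "quad_cost Pstar + ereal \<epsilon> * entropy_leb Pstar = ereal Mv"
proof -
  note mm = main[OF Pstar_coupling Pstar_dens Pstar_cost Pstar_Ip]
  have "Phi q = (\<lambda>z. 0)" by (simp add: fun_eq_iff Phi_q_zero)
  then have "integral\<^sup>L lborel (Phi q) = 0" by simp
  then show ?thesis unfolding entropy_eq[OF Pstar_dens] using mm(2) by simp
qed

lemma W_star: "entropic_W2 \<epsilon> P Qstar \<le> ereal Mv"
proof -
  have "entropic_W2 \<epsilon> P Qstar \<le> quad_cost Pstar + ereal \<epsilon> * entropy_leb Pstar"
    unfolding entropic_W2_def by (rule INF_lower[OF Pstar_coupling])
  then show ?thesis by (simp only: Pstar_value)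
qed

lemma W_lower:
  assumes "A \<in> sets borel"
  shows "ereal (Mv + \<epsilon> * ((measure Q A - measure Qstar A)\<^sup>2 / 4)) \<le> entropic_W2 \<epsilon> P Q"
  unfolding entropic_W2_def by (rule INF_greatest) (rule value_lower[OF _ assms])

lemma prob_emeasure_eq: "prob_space M \<Longrightarrow> emeasure M A = ennreal (measure M A)"
proof -
  assume "prob_space M"
  then interpret prob_space M .
  show ?thesis by (rule emeasure_eq_measure)
qed

lemma loc_thm:
  "is_prob Qstar
     \<and> (\<forall>Q. is_prob Q \<longrightarrow> entropic_W2 \<epsilon> P Qstar \<le> entropic_W2 \<epsilon> P Q)
     \<and> (\<forall>Q. is_prob Q \<and> entropic_W2 \<epsilon> P Q \<le> entropic_W2 \<epsilon> P Qstar \<longrightarrow> Q = Qstar)"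
proof (intro conjI allI impI)
  show "is_prob Qstar" by (rule Qstar_prob)
next
  fix Q :: "'a measure"
  have "ereal Mv \<le> entropic_W2 \<epsilon> P Q" using W_lower[of "{}" Q] by simp
  then show "entropic_W2 \<epsilon> P Qstar \<le> entropic_W2 \<epsilon> P Q" using W_star by (rule order_trans[rotated])
next
  fix Q :: "'a measure"
  assume "is_prob Q \<and> entropic_W2 \<epsilon> P Q \<le> entropic_W2 \<epsilon> P Qstar"
  then have Q: "prob_space Q" "sets Q = sets borel" and le: "entropic_W2 \<epsilon> P Q \<le> entropic_W2 \<epsilon> P Qstar"
    by (auto simp: is_prob_def)
  have Qs: "prob_space Qstar" "sets Qstar = sets borel" using Qstar_prob by (auto simp: is_prob_def)
  show "Q = Qstar"
  proof (rule ccontr)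
    assume ne: "Q \<noteq> Qstar"
    have "\<exists>A\<in>sets borel. emeasure Q A \<noteq> emeasure Qstar A"
    proof (rule ccontr)
      assume "\<not> ?thesis"
      then have "Q = Qstar" using Q Qs by (intro measure_eqI) auto
      then show False using ne by simp
    qed
    then obtain A where A: "A \<in> sets borel" "emeasure Q A \<noteq> emeasure Qstar A" by blast
    have "measure Q A \<noteq> measure Qstar A"
      using A(2) prob_emeasure_eq[OF Q(1), of A] prob_emeasure_eq[OF Qs(1), of A] by auto
    then have "0 < (measure Q A - measure Qstar A)\<^sup>2 / 4" by simp
    then have "0 < \<epsilon> * ((measure Q A - measure Qstar A)\<^sup>2 / 4)" using eps by simp
    then have "ereal Mv < ereal (Mv + \<epsilon> * ((measure Q A - measure Qstar A)\<^sup>2 / 4))" by simp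
    also have "\<dots> \<le> entropic_W2 \<epsilon> P Q" by (rule W_lower[OF A(1)])
    also have "\<dots> \<le> entropic_W2 \<epsilon> P Qstar" by (rule le)
    also have "\<dots> \<le> ereal Mv" by (rule W_star)
    finally show False by simp
  qed
qed


end


lemma prob_space_finite_measure': "prob_space M \<Longrightarrow> finite_measure M"
proof -
  assume "prob_space M"
  then interpret prob_space M .
  show ?thesis by (rule finite_measure_axioms)
qed

theorem theorem3:
  fixes \<epsilon> :: real and P :: "(real ^ 'd) measure" and rP :: "real ^ 'd \<Rightarrow> real"
  assumes eps: "\<epsilon> > 0"
    and probP: "is_prob P"
    and densP: "has_leb_density P rP"
    and logint: "integrable P (\<lambda>x. ln (rP x))"
  shows "is_prob (convolution P (gaussian_iso \<epsilon>))
     \<and> (\<forall>Q. is_prob Q \<longrightarrow> entropic_W2 \<epsilon> P (convolution P (gaussian_iso \<epsilon>)) \<le> entropic_W2 \<epsilon> P Q)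
     \<and> (\<forall>Q. is_prob Q \<and> entropic_W2 \<epsilon> P Q \<le> entropic_W2 \<epsilon> P (convolution P (gaussian_iso \<epsilon>))
            \<longrightarrow> Q = convolution P (gaussian_iso \<epsilon>))"
proof -
  have probP': "prob_space P" and setsP: "sets P = sets borel" using probP by (auto simp: is_prob_def)
  have loc: "ew_setup \<epsilon> P rP (gk \<epsilon>) (real CARD('d) * ln (sqrt (pi * \<epsilon>)))"
  proof (rule ew_setup.intro)
    show "\<epsilon> > 0" by (rule eps)
    show "prob_space P" by (rule probP')
    show "has_leb_density P rP" by (rule densP)
    show "integrable P (\<lambda>x. ln (rP x))" by (rule logint)
    show "gk \<epsilon> \<in> borel_measurable borel" by (rule gk_measurable)
    show "\<And>z. gk \<epsilon> z > 0" using eps by (rule gk_pos)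
    show "(\<integral>\<^sup>+z. ennreal (gk \<epsilon> z) \<partial>lborel) = 1" using eps by (rule nn_integral_gk)
    show "(\<integral>\<^sup>+z. ennreal (gk \<epsilon> z * (norm z)\<^sup>2) \<partial>lborel) < \<infinity>" using eps by (rule nn_integral_gk_moment)
    show "\<And>z::real^'d. ln (gk \<epsilon> z) = - (norm z)\<^sup>2 / \<epsilon> - real CARD('d) * ln (sqrt (pi * \<epsilon>))"
      using ln_gk[OF eps] by blast
  qed
  interpret E: ew_setup \<epsilon> P rP "gk \<epsilon>" "real CARD('d) * ln (sqrt (pi * \<epsilon>))" by (rule loc)
  define G :: "(real^'d) measure" where "G = gaussian_iso \<epsilon>"
  have G_eq: "G = density lborel (\<lambda>x. ennreal (gk \<epsilon> x))" unfolding G_def by (rule gaussian_iso_gk)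
  have Gp: "prob_space G"
  proof (rule prob_spaceI)
    show "emeasure G (space G) = 1" unfolding G_eq using nn_integral_gk[OF eps]
      by (simp add: emeasure_density)
  qed
  have setsG: "sets G = sets borel" unfolding G_eq by simp
  have conv: "E.Qstar = convolution P G"
  proof (rule measure_eqI)
    show "sets E.Qstar = sets (convolution P G)" by (simp add: E.Qstar_def)
    fix A assume "A \<in> sets E.Qstar"
    then have A[measurable]: "A \<in> sets borel" by (simp add: E.Qstar_def)
    have "emeasure E.Qstar A = emeasure E.Pstar (snd -` A)"
      unfolding E.Qstar_def by (subst emeasure_distr) (auto simp: E.Pstar_def)
    also have "\<dots> = (\<integral>\<^sup>+z. ennreal (E.q z) * indicator A (snd z) \<partial>lborel)"
      unfolding E.Pstar_def by (subst emeasure_density) (auto intro!: nn_integral_cong split: split_indicator)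
    also have "\<dots> = (\<integral>\<^sup>+x. ennreal (rP x) * (\<integral>\<^sup>+y. ennreal (gk \<epsilon> y) * indicator A (x + y) \<partial>lborel) \<partial>lborel)"
      using E.L0[of "\<lambda>z. indicator A (snd z)"] by simp
    also have "\<dots> = (\<integral>\<^sup>+x. (\<integral>\<^sup>+y. indicator A (x + y) \<partial>G) \<partial>P)"
    proof -
      have "(\<integral>\<^sup>+x. (\<integral>\<^sup>+y. indicator A (x + y) \<partial>G) \<partial>P)
          = (\<integral>\<^sup>+x. (\<integral>\<^sup>+y. ennreal (gk \<epsilon> y) * indicator A (x + y) \<partial>lborel) \<partial>P)"
        unfolding G_eq by (intro nn_integral_cong) (subst nn_integral_density, auto)
      also have "\<dots> = (\<integral>\<^sup>+x. ennreal (rP x) * (\<integral>\<^sup>+y. ennreal (gk \<epsilon> y) * indicator A (x + y) \<partial>lborel) \<partial>lborel)"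
        unfolding E.P_eq by (subst nn_integral_density) auto
      finally show ?thesis by simp
    qed
    also have "\<dots> = emeasure (convolution P G) A"
      using prob_space_finite_measure'[OF probP'] prob_space_finite_measure'[OF Gp] setsG setsP
      by (subst convolution_emeasure') auto
    finally show "emeasure E.Qstar A = emeasure (convolution P G) A" .
  qed
  show ?thesis using E.loc_thm unfolding conv G_def .
qed

end
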